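(* Let $\mathcal{U}\subseteq\mathcal{E}$ be a dead-ending universe and let $\mathcal{A}$ be the set of Left ends of $\mathcal{U}$. Then for every Left dead-end $G$ the following are equivalent: (i) $G\notin\operatorname{up}(\mathcal{A})$; (ii) $G^\circ$ is Left $\mathcal{U}$-strong; (iii) $G^{\circledast}\geq_\mathcal{U} 0$.
   Context: All games are finite partizan games; $\cong$ is identity of game trees; $o(G)$ is the misère outcome class, ordered $\mathscr{L} > \mathscr{N} > \mathscr{R}$, $\mathscr{L} > \mathscr{P} > \mathscr{R}$. A universe is a set of games closed under options, disjunctive sums, conjugates, and forming $\{\mathscr{G}^L\mid\mathscr{G}^R\}$ from nonempty finite subsets of it. For a universe $\mathcal{U}$ and arbitrary games $G,H$, $G\geq_\mathcal{U} H$ means $o(G+X)\geq o(H+X)$ for all $X\in\mathcal{U}$. A Left (Right) end is a game with no Left (Right) option; a Left dead-end is a game all of whose subpositions are Left ends, and similarly for Right; $\mathcal{L}$ denotes the set of Left dead-ends. $\mathcal{E}$ is the set of games in which every subposition that is an end is a (Left or Right) dead-end; a universe contained in $\mathcal{E}$ is dead-ending. For Left dead-ends, $G\geq H$ means $G\geq_\mathcal{V} H$ for every universe $\mathcal{V}$. For a set $\mathcal{A}$ of Left dead-ends, $\operatorname{cl}(\mathcal{A})$ is the smallest set containing $\mathcal{A}$ closed under options and sums, and $\operatorname{up}(\mathcal{A})=\{G\in\mathcal{L}: G\geq H\text{ for some }H\in\operatorname{cl}(\mathcal{A})\}$. $G$ is Left $\mathcal{U}$-strong if $o(G+X)\geq\mathscr{N}$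 for every Left end $X\in\mathcal{U}$. For a Left dead-end $G$: the adjoint is $G^\circ=*=\{0\mid 0\}$ if $G\cong 0$, and $G^\circ=\{(G^R)^\circ\mid 0\}$ otherwise ($G^R$ ranging over Right options of $G$); the Left-modified adjoint is $G^{\circledast}=\{0\mid *\}$ if $G\cong 0$ and $G^{\circledast}=\{(G^R)^\circ\mid *\}$ otherwise. *)

theory Defs
  imports Main "HOL-Library.FSet"
begin

text \<open>A game is given by its finite set of Left options and its finite set of Right
options; equality of this datatype is identity of game trees.\<close>

datatype game = Game (lopts: "game fset") (ropts: "game fset")

definition zero :: game where "zero = Game {||} {||}"
definition star :: game where "star = Game {|zero|} {|zero|}"

lemma size_le_fsum:
  "z |\<in>| A \<Longrightarrow> size z \<le> (\<Sum>x\<in>fset A. Suc (size x))" for z :: game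
  by (rule order_trans[OF _ member_le_sum[of z "fset A" "\<lambda>x. Suc (size x)"]]) auto

function gsum :: "game \<Rightarrow> game \<Rightarrow> game" where
  "gsum (Game L R) (Game L' R') =
     Game ((\<lambda>x. gsum x (Game L' R')) |`| L |\<union>| (\<lambda>y. gsum (Game L R) y) |`| L')
          ((\<lambda>x. gsum x (Game L' R')) |`| R |\<union>| (\<lambda>y. gsum (Game L R) y) |`| R')"
  by pat_completeness auto
termination
  by (relation "measure (\<lambda>(x, y). size x + size y)")
     (auto simp: less_Suc_eq_le intro: add_increasing add_increasing2 size_le_fsum)

primrec conj :: "game \<Rightarrow> game" where
  "conj (Game L R) = Game (conj |`| R) (conj |`| L)"

text \<open>Misere play: a player who cannot move wins.
  \<open>win True G\<close>: Left, moving first in \<open>G\<close>, wins;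
  \<open>win False G\<close>: Right, moving first in \<open>G\<close>, wins.\<close>
function win :: "bool \<Rightarrow> game \<Rightarrow> bool" where
  "win True (Game L R) = (L = {||} \<or> (\<exists>x\<in>fset L. \<not> win False x))"
| "win False (Game L R) = (R = {||} \<or> (\<exists>y\<in>fset R. \<not> win True y))"
  by pat_completeness auto
termination
  by (relation "measure (\<lambda>(b, x). size x)")
     (auto simp: less_Suc_eq_le intro: add_increasing add_increasing2 size_le_fsum)

datatype outcome = oL | oN | oP | oR

definition outc :: "game \<Rightarrow> outcome" where
  "outc G = (if win True G then (if win False G then oN else oL)
             else (if win False G then oR else oP))"

definition outcome_le :: "outcome \<Rightarrow> outcome \<Rightarrow> bool" where
  "outcome_le a b \<longleftrightarrow> a = b \<or> a = oR \<or> b = oL"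

inductive subpos :: "game \<Rightarrow> game \<Rightarrow> bool" where
  refl: "subpos G G"
| left: "subpos G H \<Longrightarrow> x |\<in>| lopts H \<Longrightarrow> subpos G x"
| right: "subpos G H \<Longrightarrow> x |\<in>| ropts H \<Longrightarrow> subpos G x"

definition universe :: "game set \<Rightarrow> bool" where
  "universe U \<longleftrightarrow>
     (\<forall>G\<in>U. \<forall>x. x |\<in>| lopts G \<or> x |\<in>| ropts G \<longrightarrow> x \<in> U) \<and>
     (\<forall>G\<in>U. \<forall>H\<in>U. gsum G H \<in> U) \<and>
     (\<forall>G\<in>U. conj G \<in> U) \<and>
     (\<forall>A B. A \<noteq> {||} \<and> B \<noteq> {||} \<and> fset A \<subseteq> U \<and> fset B \<subseteq> U \<longrightarrow> Game A B \<in> U)"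

definition left_end :: "game \<Rightarrow> bool" where
  "left_end G \<longleftrightarrow> lopts G = {||}"

definition right_end :: "game \<Rightarrow> bool" where
  "right_end G \<longleftrightarrow> ropts G = {||}"

definition left_dead_end :: "game \<Rightarrow> bool" where
  "left_dead_end G \<longleftrightarrow> (\<forall>H. subpos G H \<longrightarrow> left_end H)"

definition right_dead_end :: "game \<Rightarrow> bool" where
  "right_dead_end G \<longleftrightarrow> (\<forall>H. subpos G H \<longrightarrow> right_end H)"

definition dead_ending :: "game set" where
  "dead_ending = {G. \<forall>H. subpos G H \<and> (left_end H \<or> right_end H)
                        \<longrightarrow> left_dead_end H \<or> right_dead_end H}"

definition ge_U :: "game set \<Rightarrow> game \<Rightarrow> game \<Rightarrow> bool" where
  "ge_U U G H \<longleftrightarrow> (\<forall>X\<in>U. outcome_le (outc (gsum H X)) (outc (gsum G X)))"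

definition ge_all :: "game \<Rightarrow> game \<Rightarrow> bool" where
  "ge_all G H \<longleftrightarrow> (\<forall>V. universe V \<longrightarrow> ge_U V G H)"

inductive_set cl :: "game set \<Rightarrow> game set" for A :: "game set" where
  base: "G \<in> A \<Longrightarrow> G \<in> cl A"
| lopt: "G \<in> cl A \<Longrightarrow> x |\<in>| lopts G \<Longrightarrow> x \<in> cl A"
| ropt: "G \<in> cl A \<Longrightarrow> x |\<in>| ropts G \<Longrightarrow> x \<in> cl A"
| sum: "G \<in> cl A \<Longrightarrow> H \<in> cl A \<Longrightarrow> gsum G H \<in> cl A"

definition up :: "game set \<Rightarrow> game set" where
  "up A = {G. left_dead_end G \<and> (\<exists>H\<in>cl A. ge_all G H)}"

definition left_strong :: "game set \<Rightarrow> game \<Rightarrow> bool" where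
  "left_strong U G \<longleftrightarrow> (\<forall>X\<in>U. left_end X \<longrightarrow> outcome_le oN (outc (gsum G X)))"

text \<open>Adjoint and Left-modified adjoint (intended for Left dead-ends).\<close>
primrec adj :: "game \<Rightarrow> game" where
  "adj (Game L R) = (if Game L R = zero then star else Game (adj |`| R) {|zero|})"

definition lmadj :: "game \<Rightarrow> game" where
  "lmadj G = (if G = zero then Game {|zero|} {|star|} else Game (adj |`| ropts G) {|star|})"

end

theory Submission imports Defs begin

lemma size_lopt: "x |\<in>| lopts G \<Longrightarrow> size x < size G"
  by (cases G) (auto simp: less_Suc_eq_le intro: add_increasing add_increasing2 size_le_fsum)
lemma size_ropt: "x |\<in>| ropts G \<Longrightarrow> size x < size G"
  by (cases G) (auto simp: less_Suc_eq_le intro: add_increasing add_increasing2 size_le_fsum)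

lemma lopts_gsum: "lopts (gsum a b) = (\<lambda>x. gsum x b) |`| lopts a |\<union>| (\<lambda>y. gsum a y) |`| lopts b"
  by (cases a; cases b) simp
lemma ropts_gsum: "ropts (gsum a b) = (\<lambda>x. gsum x b) |`| ropts a |\<union>| (\<lambda>y. gsum a y) |`| ropts b"
  by (cases a; cases b) simp

lemma win_T: "win True G = (lopts G = {||} \<or> (\<exists>x. x |\<in>| lopts G \<and> \<not> win False x))"
  by (cases G) auto
lemma win_F: "win False G = (ropts G = {||} \<or> (\<exists>x. x |\<in>| ropts G \<and> \<not> win True x))"
  by (cases G) auto

lemma gsum_zero: "gsum x zero = x"
proof (induction x)
  case (Game L R)
  have "(\<lambda>x. gsum x zero) |`| L = L" using Game(1) by (simp add: fset.map_ident_strong)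
  moreover have "(\<lambda>x. gsum x zero) |`| R = R" using Game(2) by (simp add: fset.map_ident_strong)
  ultimately show ?case by (simp add: zero_def)
qed

lemma zero_gsum: "gsum zero x = x"
proof (induction x)
  case (Game L R)
  have "(\<lambda>x. gsum zero x) |`| L = L" using Game(1) by (simp add: fset.map_ident_strong)
  moreover have "(\<lambda>x. gsum zero x) |`| R = R" using Game(2) by (simp add: fset.map_ident_strong)
  ultimately show ?case by (simp add: zero_def)
qed

lemma gsum_comm: "gsum a b = gsum b a"
proof (induction a b rule: gsum.induct)
  case (1 L R L' R')
  have e1: "(\<lambda>x. gsum x (Game L' R')) |`| L = (\<lambda>y. gsum (Game L' R') y) |`| L"
    using 1(1) by (intro fset.map_cong0) auto
  have e2: "(\<lambda>y. gsum (Game L R) y) |`| L' = (\<lambda>x. gsum x (Game L R)) |`| L'"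
    using 1(2) by (intro fset.map_cong0) auto
  have e3: "(\<lambda>x. gsum x (Game L' R')) |`| R = (\<lambda>y. gsum (Game L' R') y) |`| R"
    using 1(3) by (intro fset.map_cong0) auto
  have e4: "(\<lambda>y. gsum (Game L R) y) |`| R' = (\<lambda>x. gsum x (Game L R)) |`| R'"
    using 1(4) by (intro fset.map_cong0) auto
  show ?case by (simp add: e1 e2 e3 e4 funion_commute)
qed

lemma outcome_le_iff: "outcome_le (outc a) (outc b) \<longleftrightarrow> (win True a \<longrightarrow> win True b) \<and> (win False b \<longrightarrow> win False a)"
  by (auto simp: outcome_le_def outc_def)
lemma oN_le: "outcome_le oN (outc a) \<longleftrightarrow> win True a"
  by (auto simp: outcome_le_def outc_def)

lemma subpos_ropt: "subpos g H \<Longrightarrow> g |\<in>| ropts G \<Longrightarrow> subpos G H"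
  by (induction rule: subpos.induct) (auto intro: subpos.intros)

lemma ldead_lopts: "left_dead_end G \<Longrightarrow> lopts G = {||}"
  by (auto simp: left_dead_end_def left_end_def intro: subpos.refl)
lemma ldead_ropt: "left_dead_end G \<Longrightarrow> g |\<in>| ropts G \<Longrightarrow> left_dead_end g"
  by (auto simp: left_dead_end_def intro: subpos_ropt)
lemma ldead_zero: "left_dead_end G \<Longrightarrow> ropts G = {||} \<Longrightarrow> G = zero"
  using ldead_lopts[of G] by (cases G) (auto simp: zero_def)

lemma adj_lopts: "lopts (adj G) = (if G = zero then {|zero|} else adj |`| ropts G)"
  by (cases G) (auto simp: star_def)
lemma adj_ropts: "ropts (adj G) = {|zero|}"
  by (cases G) (auto simp: star_def)
lemma lmadj_ropts: "ropts (lmadj G) = {|star|}"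
  by (simp add: lmadj_def)
lemma lmadj_lopts: "lopts (lmadj G) = lopts (adj G)"
  by (cases G) (auto simp: star_def lmadj_def zero_def)

lemma win_T_lend: "lopts X = {||} \<Longrightarrow> win True (gsum a X) \<longleftrightarrow> (lopts a = {||} \<or> (\<exists>x. x|\<in>|lopts a \<and> \<not> win False (gsum x X)))"
  by (subst win_T) (auto simp: lopts_gsum)


lemma adj_zero: "adj zero = star" by (simp add: zero_def)

lemma ldead_nz: "left_dead_end G \<Longrightarrow> G \<noteq> zero \<Longrightarrow> ropts G \<noteq> {||}"
  using ldead_zero by blast

lemma lemN: "left_dead_end G \<Longrightarrow> \<not> win True (gsum (adj G) G)"
proof (induction G rule: measure_induct_rule[where f=size])
  case (less G)
  show ?case
  proof (cases "G = zero")
    case True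
    have "win False zero" by (simp add: zero_def)
    then show ?thesis using True by (simp add: gsum_zero adj_zero star_def)
  next
    case False
    have lG: "lopts G = {||}" using less.prems by (rule ldead_lopts)
    have "\<And>g. g |\<in>| ropts G \<Longrightarrow> win False (gsum (adj g) G)"
    proof -
      fix g assume g: "g |\<in>| ropts G"
      have "\<not> win True (gsum (adj g) g)"
        using less.IH[OF size_ropt[OF g] ldead_ropt[OF less.prems g]] .
      moreover have "gsum (adj g) g |\<in>| ropts (gsum (adj g) G)"
        using g by (simp add: ropts_gsum)
      ultimately show "win False (gsum (adj g) G)" by (subst win_F) blast
    qed
    then show ?thesis using False ldead_nz[OF less.prems False]
      by (subst win_T_lend[OF lG]) (auto simp: adj_lopts)
  qed
qed

lemma lemM:
  "left_dead_end G \<Longrightarrow> left_dead_end H \<Longrightarrow> \<not> win True (gsum (adj G) H) \<Longrightarrow>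
   (win True (gsum H Y) \<longrightarrow> win True (gsum G Y)) \<and> (win False (gsum G Y) \<longrightarrow> win False (gsum H Y))"
proof (induction "size G + size H + size Y" arbitrary: G H Y rule: less_induct)
  case less
  have lG: "lopts G = {||}" using less.prems(1) by (rule ldead_lopts)
  have lH: "lopts H = {||}" using less.prems(2) by (rule ldead_lopts)
  have A: "win True (gsum H Y) \<longrightarrow> win True (gsum G Y)"
  proof
    assume w: "win True (gsum H Y)"
    show "win True (gsum G Y)"
    proof (cases "lopts Y = {||}")
      case True then show ?thesis by (subst win_T) (simp add: lopts_gsum lG)
    next
      case False
      then obtain y where y: "y |\<in>| lopts Y" "\<not> win False (gsum H y)"
        using w by (subst (asm) win_T) (auto simp: lopts_gsum lH)
      have "\<not> win False (gsum G y)"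
        using less.hyps[of G H y] less.prems y size_lopt[OF y(1)] by auto
      then show ?thesis using y(1) by (subst win_T) (auto simp: lopts_gsum)
    qed
  qed
  have B: "win False (gsum G Y) \<longrightarrow> win False (gsum H Y)"
  proof
    assume w: "win False (gsum G Y)"
    show "win False (gsum H Y)"
    proof (cases "ropts (gsum G Y) = {||}")
      case True
      then have rG: "ropts G = {||}" and rY: "ropts Y = {||}" by (auto simp: ropts_gsum)
      have Gz: "G = zero" using ldead_zero[OF less.prems(1) rG] .
      have "win False H" using less.prems(3) Gz
        by (subst (asm) win_T_lend[OF lH]) (simp add: adj_zero star_def zero_gsum)
      then have "ropts H = {||}"
        by (subst (asm) win_F) (auto simp: win_T ldead_lopts[OF ldead_ropt[OF less.prems(2)]])
      then show ?thesis by (subst win_F) (simp add: ropts_gsum rY)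
    next
      case False
      then obtain x where x: "x |\<in>| ropts (gsum G Y)" "\<not> win True x"
        using w by (subst (asm) win_F) auto
      then consider (a) g where "g |\<in>| ropts G" "x = gsum g Y"
        | (b) y where "y |\<in>| ropts Y" "x = gsum G y"
        by (auto simp: ropts_gsum)
      then show ?thesis
      proof cases
        case (b y)
        have "\<not> win True (gsum H y)"
          using less.hyps[of G H y] less.prems b x(2) size_ropt[OF b(1)] by auto
        then show ?thesis using b(1) by (subst win_F) (auto simp: ropts_gsum)
      next
        case (a g)
        have Gnz: "G \<noteq> zero" using a(1) by (auto simp: zero_def)
        have "win False (gsum (adj g) H)"
          using less.prems(3) a(1) Gnz by (subst (asm) win_T_lend[OF lH]) (auto simp: adj_lopts)
        moreover have "win True H" by (subst win_T) (simp add: lH)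
        ultimately obtain h where h: "h |\<in>| ropts H" "\<not> win True (gsum (adj g) h)"
          by (subst (asm) win_F) (auto simp: ropts_gsum adj_ropts zero_gsum)
        have "\<not> win True (gsum h Y)"
          using less.hyps[of g h Y] ldead_ropt[OF less.prems(1) a(1)] ldead_ropt[OF less.prems(2) h(1)]
            h(2) a x(2) size_ropt[OF a(1)] size_ropt[OF h(1)] by auto
        then show ?thesis using h(1) by (subst win_F) (auto simp: ropts_gsum)
      qed
    qed
  qed
  show ?case using A B by blast
qed


lemma subpos_zero0: "subpos A H \<Longrightarrow> A = zero \<Longrightarrow> H = zero"
  by (induction rule: subpos.induct) (auto simp: zero_def)
lemma subpos_zero: "subpos zero H \<Longrightarrow> H = zero"
  using subpos_zero0 by blast
lemma ldead_zero': "left_dead_end zero"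
  unfolding left_dead_end_def left_end_def
proof (intro allI impI)
  fix H assume "subpos zero H"
  then have "H = zero" by (rule subpos_zero)
  then show "lopts H = {||}" by (simp add: zero_def)
qed

lemma universe_UNIV: "universe UNIV" by (simp add: universe_def)

lemma univ_opt: "universe U \<Longrightarrow> G \<in> U \<Longrightarrow> x |\<in>| lopts G \<or> x |\<in>| ropts G \<Longrightarrow> x \<in> U"
proof -
  assume u: "universe U" and g: "G \<in> U" and x: "x |\<in>| lopts G \<or> x |\<in>| ropts G"
  have "\<forall>G\<in>U. \<forall>x. x |\<in>| lopts G \<or> x |\<in>| ropts G \<longrightarrow> x \<in> U"
    using u unfolding universe_def by (rule conjunct1)
  then show "x \<in> U" using g x by blast
qed
lemma univ_sum: "universe U \<Longrightarrow> G \<in> U \<Longrightarrow> H \<in> U \<Longrightarrow> gsum G H \<in> U"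
proof -
  assume u: "universe U" and g: "G \<in> U" and h: "H \<in> U"
  have "\<forall>G\<in>U. \<forall>H\<in>U. gsum G H \<in> U"
    using u unfolding universe_def by (elim conjE)
  then show ?thesis using g h by blast
qed
lemma de_end: "G \<in> dead_ending \<Longrightarrow> left_end G \<Longrightarrow> left_dead_end G \<or> right_dead_end G"
  unfolding dead_ending_def using subpos.refl[of G] by blast
lemma rde_ropts: "right_dead_end G \<Longrightarrow> ropts G = {||}"
  unfolding right_dead_end_def right_end_def using subpos.refl[of G] by blast

lemma cl_sub:
  assumes U: "universe U" "U \<subseteq> dead_ending"
  shows "H \<in> cl {X \<in> U. left_end X} \<Longrightarrow> H \<in> U \<and> left_end H"
proof (induction rule: cl.induct)
  case (base G) then show ?case by simp
next
  case (lopt G x) then show ?case by (simp add: left_end_def)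
next
  case (ropt G x)
  have xU: "x \<in> U" using univ_opt[OF U(1)] ropt by blast
  have "G \<in> dead_ending" using ropt U(2) by blast
  then have "left_dead_end G \<or> right_dead_end G" using de_end ropt.IH by blast
  then show ?case
  proof
    assume "left_dead_end G"
    then show ?thesis using xU ldead_ropt[OF _ ropt.hyps(2)] ldead_lopts
      by (simp add: left_end_def)
  next
    assume "right_dead_end G"
    then have "ropts G = {||}" by (rule rde_ropts)
    then show ?thesis using ropt.hyps(2) by simp
  qed
next
  case (sum G H)
  then show ?case using univ_sum[OF U(1)] by (simp add: left_end_def lopts_gsum)
qed

lemma ii_iii:
  assumes U: "universe U" and ii: "\<forall>X\<in>U. left_end X \<longrightarrow> win True (gsum (adj G) X)"
  shows "Y \<in> U \<Longrightarrow> (win True Y \<longrightarrow> win True (gsum (lmadj G) Y)) \<and> (win False (gsum (lmadj G) Y) \<longrightarrow> win False Y)"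
proof (induction Y rule: measure_induct_rule[where f=size])
  case (less Y)
  have opt: "\<And>y. y |\<in>| lopts Y \<or> y |\<in>| ropts Y \<Longrightarrow> y \<in> U"
    using univ_opt[OF U less.prems] by blast
  have A: "win True Y \<longrightarrow> win True (gsum (lmadj G) Y)"
  proof
    assume w: "win True Y"
    show "win True (gsum (lmadj G) Y)"
    proof (cases "lopts Y = {||}")
      case True
      then have "win True (gsum (adj G) Y)" using ii less.prems by (simp add: left_end_def)
      then show ?thesis using True by (simp add: win_T_lend lmadj_lopts)
    next
      case False
      then obtain y where y: "y |\<in>| lopts Y" "\<not> win False y" using w by (subst (asm) win_T) auto
      have "y \<in> U" using opt y(1) by blast
      then have "\<not> win False (gsum (lmadj G) y)" using less.IH[OF size_lopt[OF y(1)]] y(2) by blast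
      then show ?thesis using y(1) by (subst win_T) (auto simp: lopts_gsum)
    qed
  qed
  have B: "\<not> win False Y \<longrightarrow> \<not> win False (gsum (lmadj G) Y)"
  proof
    assume w: "\<not> win False Y"
    have wF: "win False Y = (ropts Y = {||} \<or> (\<exists>x. x |\<in>| ropts Y \<and> \<not> win True x))"
      by (rule win_F)
    have all: "\<And>y. y |\<in>| ropts Y \<Longrightarrow> win True y" using w wF by blast
    have s: "win True (gsum star Y)"
      using w by (subst win_T) (auto simp: lopts_gsum star_def zero_gsum)
    have "win True (gsum (lmadj G) y)" if yr: "y |\<in>| ropts Y" for y
    proof -
      have "y \<in> U" using opt yr by blast
      then have "win True y \<longrightarrow> win True (gsum (lmadj G) y)"
        using less.IH[OF size_ropt[OF yr]] by blast
      then show ?thesis using all[OF yr] by blast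
    qed
    then have "\<forall>x. x |\<in>| ropts (gsum (lmadj G) Y) \<longrightarrow> win True x"
      using s by (auto simp: ropts_gsum lmadj_ropts)
    moreover have "ropts (gsum (lmadj G) Y) \<noteq> {||}" by (simp add: ropts_gsum lmadj_ropts)
    ultimately show "\<not> win False (gsum (lmadj G) Y)"
      using win_F[of "gsum (lmadj G) Y"] by blast
  qed
  show ?case using A B by blast
qed

theorem mainTheorem3:
  fixes U :: "game set" and G :: game
  assumes "universe U" and "U \<subseteq> dead_ending" and "left_dead_end G"
  shows "(G \<notin> up {X \<in> U. left_end X} \<longleftrightarrow> left_strong U (adj G)) \<and>
         (left_strong U (adj G) \<longleftrightarrow> ge_U U (lmadj G) zero)"
proof -
  have ls: "left_strong U (adj G) \<longleftrightarrow> (\<forall>X\<in>U. left_end X \<longrightarrow> win True (gsum (adj G) X))"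
    by (simp add: left_strong_def oN_le)
  have c1: "G \<notin> up {X \<in> U. left_end X} \<longleftrightarrow> left_strong U (adj G)"
  proof
    assume nu: "G \<notin> up {X \<in> U. left_end X}"
    show "left_strong U (adj G)" unfolding ls
    proof (intro ballI impI, rule ccontr)
      fix X assume X: "X \<in> U" "left_end X" "\<not> win True (gsum (adj G) X)"
      have "X \<in> dead_ending" using X assms(2) by blast
      then have "left_dead_end X \<or> right_dead_end X"
        using X(2) de_end by blast
      then have ldX: "left_dead_end X"
      proof
        assume "right_dead_end X"
        then have "ropts X = {||}" by (rule rde_ropts)
        then have "X = zero" using X(2) by (cases X) (auto simp: left_end_def zero_def)
        then show ?thesis using ldead_zero' by simp
      qed
      have "outcome_le (outc (gsum X Y)) (outc (gsum G Y))" for Y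
        unfolding outcome_le_iff by (rule lemM[OF assms(3) ldX X(3)])
      then have "ge_all G X" unfolding ge_all_def ge_U_def by blast
      moreover have "X \<in> cl {X \<in> U. left_end X}" by (rule cl.base) (simp add: X)
      ultimately have "G \<in> up {X \<in> U. left_end X}" using assms(3)
        unfolding up_def by blast
      then show False using nu by blast
    qed
  next
    assume "left_strong U (adj G)"
    then have ii: "\<forall>X\<in>U. left_end X \<longrightarrow> win True (gsum (adj G) X)" using ls by blast
    show "G \<notin> up {X \<in> U. left_end X}"
    proof
      assume "G \<in> up {X \<in> U. left_end X}"
      then obtain H where H: "H \<in> cl {X \<in> U. left_end X}" "ge_all G H" unfolding up_def by blast
      have HU0: "H \<in> U \<and> left_end H" by (rule cl_sub[OF assms(1,2) H(1)])
      have HU: "H \<in> U" "left_end H" using HU0 by simp_all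
      have "ge_U UNIV G H" using H(2) universe_UNIV by (simp add: ge_all_def)
      then have "outcome_le (outc (gsum H (adj G))) (outc (gsum G (adj G)))"
        by (simp add: ge_U_def)
      moreover have "win True (gsum H (adj G))" unfolding gsum_comm[of H] using ii HU by blast
      ultimately have "win True (gsum G (adj G))" unfolding outcome_le_iff by blast
      then show False using lemN[OF assms(3)] unfolding gsum_comm[of G] by blast
    qed
  qed
  have c2: "left_strong U (adj G) \<longleftrightarrow> ge_U U (lmadj G) zero"
  proof
    assume "left_strong U (adj G)"
    then have ii: "\<forall>X\<in>U. left_end X \<longrightarrow> win True (gsum (adj G) X)" using ls by blast
    have "outcome_le (outc (gsum zero X)) (outc (gsum (lmadj G) X))" if XU: "X \<in> U" for X
      unfolding zero_gsum outcome_le_iff by (rule ii_iii[OF assms(1) ii XU])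
    then show "ge_U U (lmadj G) zero" by (simp add: ge_U_def)
  next
    assume g: "ge_U U (lmadj G) zero"
    show "left_strong U (adj G)" unfolding ls
    proof (intro ballI impI)
      fix X assume X: "X \<in> U" "left_end X"
      have "win True X" using X(2) by (subst win_T) (simp add: left_end_def)
      moreover have "outcome_le (outc (gsum zero X)) (outc (gsum (lmadj G) X))"
        using g X(1) by (simp add: ge_U_def)
      ultimately have "win True (gsum (lmadj G) X)" unfolding zero_gsum outcome_le_iff by blast
      then show "win True (gsum (adj G) X)" using X(2)
        by (simp add: win_T_lend left_end_def lmadj_lopts)
    qed
  qed
  show ?thesis using c1 c2 by blast
qed

end
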